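(* Let $P\subset\mathbb R^n$ be an $n$-dimensional strongly monotypic polytope, and let $X_1,\dots,X_k$ be pairwise disjoint subsets of $N(P)$ such that (i) each $X_i$ is the vertex set of a simplex whose relative interior contains $0$, (ii) the linear spaces $\operatorname{span}X_1,\dots,\operatorname{span}X_k$ are linearly independent, and (iii) $\operatorname{span} X_1\oplus\cdots\oplus\operatorname{span} X_k=\mathbb R^n$. Then there exists a set $V\subset\mathbb R^n$ of $|X_1|\cdots|X_k|$ vectors such that for every point $x$ on the boundary of $P$ there is a vector $v\in V$ with $x-v$ in the interior of $P$. In particular, since $|X_1|\cdots|X_k|\le 2^n$, Hadwiger's conjecture holds for $P$: $P$ can be covered by at most $2^n$ translates of $(1-\epsilon)P$ for some $\epsilon>0$.
   Context: For a polytope $P$, $N(P)$ denotes the set of outer unit normal vectors of the facets of $P$. A polytope $P$ is called strongly monotypic if for every polytope $Q$ with $N(Q)=N(P)$, the arrangement of the hyperplanes containing the facets of $P$ and the arrangement of the hyperplanes containing the facets of $Q$ are combinatorially equivalent. (Such subsets $X_1,\dots,X_k$ always exist for a strongly monotypic polytope.) *)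

theory Defs
  imports "HOL-Analysis.Analysis"
begin

definition facet_normals :: "'a::euclidean_space set \<Rightarrow> 'a set" where
  "facet_normals P = {u. norm u = 1 \<and>
     (\<exists>F b. F facet_of P \<and> P \<subseteq> {x. u \<bullet> x \<le> b} \<and> F \<subseteq> {x. u \<bullet> x = b})}"

definition support_fun :: "'a::euclidean_space set \<Rightarrow> 'a \<Rightarrow> real" where
  "support_fun P u = (SUP x\<in>P. u \<bullet> x)"

text \<open>The hyperplane arrangement of the facet hyperplanes
  {x. u \<bullet> x = h_P(u)}, u \<in> N(P), encoded by its set of realised
  (oriented) sign vectors; the faces of the arrangement are exactly the
  nonempty sets of points with a common sign vector.\<close>
definition arrangement_signs :: "'a::euclidean_space set \<Rightarrow> ('a \<Rightarrow> real) set" where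
  "arrangement_signs P =
     (\<lambda>x. \<lambda>u. if u \<in> facet_normals P then sgn (u \<bullet> x - support_fun P u) else 0) ` UNIV"

text \<open>Combinatorial equivalence of the facet-hyperplane arrangements of P and Q
  (N(P) = N(Q)), the hyperplanes being matched via their common normal vectors:
  the face posets coincide, i.e. the sets of realised sign vectors are equal.\<close>
definition arrangement_comb_equiv :: "'a::euclidean_space set \<Rightarrow> 'a set \<Rightarrow> bool" where
  "arrangement_comb_equiv P Q \<longleftrightarrow> arrangement_signs P = arrangement_signs Q"

definition strongly_monotypic :: "'a::euclidean_space set \<Rightarrow> bool" where
  "strongly_monotypic P \<longleftrightarrow> polytope P \<and>
     (\<forall>Q. polytope Q \<and> facet_normals Q = facet_normals P \<longrightarrow> arrangement_comb_equiv P Q)"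

end

theory Submission
  imports Defs
begin

lemma normal_unique:
  fixes S C :: "'a::euclidean_space set"
  assumes int: "interior S \<noteq> {}" and CS: "C \<subseteq> S" and dC: "aff_dim C = int DIM('a) - 1"
    and Su: "S \<subseteq> {x. u \<bullet> x \<le> c}" and Cu: "C \<subseteq> {x. u \<bullet> x = c}"
    and Sv: "S \<subseteq> {x. v \<bullet> x \<le> d}" and Cv: "C \<subseteq> {x. v \<bullet> x = d}"
    and nu: "norm u = 1" and nv: "norm v = 1"
  shows "u = v"
proof -
  have u0: "u \<noteq> 0" and v0: "v \<noteq> 0" using nu nv by auto
  have Cne: "C \<noteq> {}"
  proof
    assume "C = {}"
    then have "aff_dim C = -1" by simp
    moreover have "DIM('a) \<ge> 1" by (simp add: DIM_positive Suc_leI)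
    ultimately show False using dC by simp
  qed
  have hu: "affine hull C = {x. u \<bullet> x = c}"
    apply (rule affine_dim_equal)
    using Cne Cu u0 dC by (auto simp: affine_hyperplane hull_minimal)
  have hv: "affine hull C = {x. v \<bullet> x = d}"
    apply (rule affine_dim_equal)
    using Cne Cv v0 dC by (auto simp: affine_hyperplane hull_minimal)
  obtain x0 where x0: "x0 \<in> C" using Cne by auto
  have ux0: "u \<bullet> x0 = c" and vx0: "v \<bullet> x0 = d" using x0 Cu Cv by auto
  have orth: "v \<bullet> e = 0" if "u \<bullet> e = 0" for e
  proof -
    have "x0 + e \<in> {x. u \<bullet> x = c}" using ux0 that by (simp add: inner_add_right)
    then have "x0 + e \<in> {x. v \<bullet> x = d}" using hu hv by simp
    then show ?thesis using vx0 by (simp add: inner_add_right)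
  qed
  define e where "e = v - (v \<bullet> u) *\<^sub>R u"
  have uu: "u \<bullet> u = 1" using nu by (simp add: norm_eq_1)
  have vv: "v \<bullet> v = 1" using nv by (simp add: norm_eq_1)
  have "u \<bullet> e = 0" unfolding e_def using uu by (simp add: inner_diff_right inner_commute)
  then have "v \<bullet> e = 0" by (rule orth)
  then have "e \<bullet> e = 0" unfolding e_def using uu vv
    by (simp add: inner_diff_left inner_diff_right inner_commute algebra_simps)
  then have e0: "e = 0" by simp
  then have vu: "v = (v \<bullet> u) *\<^sub>R u" unfolding e_def by simp
  then have "(v \<bullet> u)^2 = 1" using vv uu
    by (metis inner_scaleR_left inner_scaleR_right mult.assoc mult_1_right power2_eq_square)
  then have "v \<bullet> u = 1 \<or> v \<bullet> u = -1"
    by (metis power2_eq_1_iff)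
  moreover
  obtain q where q: "q \<in> interior S" using int by auto
  then obtain r where r: "r > 0" "ball q r \<subseteq> S" using mem_interior by blast
  have "q + (r/2) *\<^sub>R u \<in> S" using r nu by (intro subsetD[OF r(2)]) (simp add: dist_norm)
  then have "u \<bullet> (q + (r/2) *\<^sub>R u) \<le> c" using Su by auto
  then have uq: "u \<bullet> q < c" using uu r by (simp add: inner_add_right)
  have "q + (r/2) *\<^sub>R v \<in> S" using r nv by (intro subsetD[OF r(2)]) (simp add: dist_norm)
  then have "v \<bullet> (q + (r/2) *\<^sub>R v) \<le> d" using Sv by auto
  then have vq: "v \<bullet> q < d" using vv r by (simp add: inner_add_right)
  have "v \<bullet> u \<noteq> -1"
  proof
    assume m: "v \<bullet> u = -1"
    then have "v = - u" using vu by simp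
    then have "d = - c" using ux0 vx0 by simp
    with vq \<open>v = -u\<close> uq show False by simp
  qed
  ultimately have "v \<bullet> u = 1" by blast
  then show ?thesis using vu by simp
qed

lemma facet_normals_explicit:
  fixes N :: "'a::euclidean_space set" and b :: "'a \<Rightarrow> real" and Q :: "'a set"
  assumes Qdef: "Q = {y. \<forall>w\<in>N. w \<bullet> y \<le> b w}"
    and fin: "finite N" and unit: "\<forall>w\<in>N. norm w = 1" and bdd: "bounded Q"
    and int: "interior Q \<noteq> {}"
    and fac: "\<forall>w\<in>N. \<exists>F. F \<subseteq> Q \<and> F \<subseteq> {y. w \<bullet> y = b w} \<and> aff_dim F = int DIM('a) - 1"
  shows "polytope Q" "facet_normals Q = N" "\<forall>w\<in>N. support_fun Q w = b w"
proof -
  have Qeq: "Q = \<Inter>((\<lambda>w. {y. w \<bullet> y \<le> b w}) ` N)" using Qdef by auto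
  have ph: "polyhedron Q" unfolding Qeq
    using fin by (intro polyhedron_Inter) (auto simp: polyhedron_halfspace_le)
  then show "polytope Q" using bdd by (simp add: polytope_eq_bounded_polyhedron)
  have cvx: "convex Q" using ph polyhedron_imp_convex by blast
  have dQ: "aff_dim Q = int DIM('a)" using int aff_dim_nonempty_interior by blast
  have facetw: "(Q \<inter> {y. w \<bullet> y = b w}) facet_of Q" and exw: "\<exists>y\<in>Q. w \<bullet> y = b w"
    if w: "w \<in> N" for w
  proof -
    obtain F where F: "F \<subseteq> Q" "F \<subseteq> {y. w \<bullet> y = b w}" "aff_dim F = int DIM('a) - 1"
      using fac w by blast
    have w0: "w \<noteq> 0" using unit w by auto
    have Fne: "F \<noteq> {}" using F(3) by (auto simp: DIM_positive)
    have le: "\<And>x. x \<in> Q \<Longrightarrow> w \<bullet> x \<le> b w" using Qdef w by auto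
    have face: "(Q \<inter> {y. w \<bullet> y = b w}) face_of Q"
      by (rule face_of_Int_supporting_hyperplane_le[OF cvx le])
    have "aff_dim (Q \<inter> {y. w \<bullet> y = b w}) \<le> aff_dim {y. w \<bullet> y = b w}"
      by (rule aff_dim_subset) auto
    moreover have "aff_dim F \<le> aff_dim (Q \<inter> {y. w \<bullet> y = b w})"
      by (rule aff_dim_subset) (use F in auto)
    ultimately have "aff_dim (Q \<inter> {y. w \<bullet> y = b w}) = aff_dim Q - 1"
      using F(3) w0 dQ by simp
    then show "(Q \<inter> {y. w \<bullet> y = b w}) facet_of Q"
      using face Fne F unfolding facet_of_def by auto
    show "\<exists>y\<in>Q. w \<bullet> y = b w" using Fne F by auto
  qed
  show sup: "\<forall>w\<in>N. support_fun Q w = b w"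
  proof
    fix w assume w: "w \<in> N"
    obtain y where y: "y \<in> Q" "w \<bullet> y = b w" using exw[OF w] by blast
    show "support_fun Q w = b w" unfolding support_fun_def
      by (rule cSup_eq_maximum) (use y Qdef w in \<open>auto intro!: image_eqI[where x=y]\<close>)
  qed
  show "facet_normals Q = N"
  proof
    show "N \<subseteq> facet_normals Q"
    proof
      fix w assume w: "w \<in> N"
      show "w \<in> facet_normals Q" unfolding facet_normals_def
        using facetw[OF w] unit w Qdef by blast
    qed
  next
    show "facet_normals Q \<subseteq> N"
    proof
      fix u assume "u \<in> facet_normals Q"
      then obtain F c where nu: "norm u = 1" and F: "F facet_of Q" and Qu: "Q \<subseteq> {x. u \<bullet> x \<le> c}"
        and Fu: "F \<subseteq> {x. u \<bullet> x = c}" unfolding facet_normals_def by blast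
      have FQ: "F \<subseteq> Q" using F facet_of_imp_subset by blast
      have Fne: "F \<noteq> {}" using F unfolding facet_of_def by blast
      have cF: "convex F" using F facet_of_imp_face_of face_of_imp_convex by blast
      obtain x0 where x0: "x0 \<in> rel_interior F" using rel_interior_eq_empty cF Fne by blast
      have x0F: "x0 \<in> F" using x0 rel_interior_subset by blast
      have "\<exists>w\<in>N. w \<bullet> x0 = b w"
      proof (rule ccontr)
        assume "\<not> (\<exists>w\<in>N. w \<bullet> x0 = b w)"
        then have lt: "\<forall>w\<in>N. w \<bullet> x0 < b w" using x0F FQ Qdef by force
        define Opn where "Opn = \<Inter>((\<lambda>w. {y. w \<bullet> y < b w}) ` N)"
        have "open Opn" unfolding Opn_def using fin by (intro open_Inter) (auto simp: open_halfspace_lt)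
        moreover have "Opn \<subseteq> Q" unfolding Opn_def Qdef by (auto intro: less_imp_le)
        moreover have "x0 \<in> Opn" unfolding Opn_def using lt by auto
        ultimately have "x0 \<in> interior Q" using interior_maximal by (metis interior_open subsetD interior_mono)
        then obtain r where r: "r > 0" "ball x0 r \<subseteq> Q" using mem_interior by blast
        have "x0 + (r/2) *\<^sub>R u \<in> Q" using r nu by (intro subsetD[OF r(2)]) (simp add: dist_norm)
        then have "u \<bullet> (x0 + (r/2) *\<^sub>R u) \<le> c" using Qu by auto
        moreover have "u \<bullet> u = 1" using nu by (simp add: norm_eq_1)
        ultimately show False using r x0F Fu by (auto simp: inner_add_right)
      qed
      then obtain w where w: "w \<in> N" "w \<bullet> x0 = b w" by blast
      have "F \<subseteq> Q \<inter> {y. w \<bullet> y = b w}"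
        apply (rule subset_of_face_of[OF facetw[OF w(1), THEN facet_of_imp_face_of] FQ])
        using x0 w x0F FQ by blast
      then have Fw: "F \<subseteq> {y. w \<bullet> y = b w}" by blast
      have dF: "aff_dim F = int DIM('a) - 1" using F dQ unfolding facet_of_def by simp
      have "u = w"
        by (rule normal_unique[OF int FQ dF Qu Fu _ Fw nu]) (use Qdef w unit in auto)
      then show "u \<in> N" using w by simp
    qed
  qed
qed

lemma support_upper:
  fixes S :: "'a::euclidean_space set"
  assumes "bounded S" "x \<in> S"
  shows "w \<bullet> x \<le> support_fun S w"
proof -
  have "bdd_above ((\<lambda>x. x \<bullet> w) ` S)" using assms(1) by (rule bounded_inner_imp_bdd_above)
  then have "bdd_above ((\<lambda>x. w \<bullet> x) ` S)" by (simp add: inner_commute)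
  then show ?thesis unfolding support_fun_def using assms(2) by (rule cSUP_upper2) simp
qed

lemma support_least:
  fixes S :: "'a::euclidean_space set"
  assumes "S \<noteq> {}" "\<And>x. x \<in> S \<Longrightarrow> w \<bullet> x \<le> c"
  shows "support_fun S w \<le> c"
  unfolding support_fun_def using assms by (intro cSUP_least) auto

lemma polytope_rep:
  fixes P :: "'a::euclidean_space set"
  assumes pP: "polytope P" and dP: "aff_dim P = int DIM('a)"
  shows "finite (facet_normals P)" "\<forall>w\<in>facet_normals P. norm w = 1"
    "P = {y. \<forall>w\<in>facet_normals P. w \<bullet> y \<le> support_fun P w}"
    "\<forall>w\<in>facet_normals P. \<exists>F. F \<subseteq> P \<and> F \<subseteq> {y. w \<bullet> y = support_fun P w} \<and> aff_dim F = int DIM('a) - 1"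
    "interior P \<noteq> {}" "bounded P" "P \<noteq> {}"
proof -
  have bP: "bounded P" using pP polytope_imp_bounded by blast
  then show "bounded P" .
  have cP: "convex P" using pP polytope_imp_convex by blast
  have ahP: "affine hull P = UNIV" using dP aff_dim_eq_full by blast
  show Pne: "P \<noteq> {}" using dP by (auto simp: DIM_positive)
  have "rel_interior P \<noteq> {}" using cP Pne rel_interior_eq_empty by blast
  then show intP: "interior P \<noteq> {}" using rel_interior_interior[OF ahP] by simp
  show "\<forall>w\<in>facet_normals P. norm w = 1" unfolding facet_normals_def by auto
  define NF where "NF F = {u. norm u = 1 \<and> (\<exists>c. P \<subseteq> {x. u \<bullet> x \<le> c} \<and> F \<subseteq> {x. u \<bullet> x = c})}" for F
  have finNF: "finite (NF F)" if F: "F facet_of P" for F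
  proof (cases "NF F = {}")
    case True then show ?thesis by simp
  next
    case False
    then obtain u0 where u0: "u0 \<in> NF F" by blast
    have FP: "F \<subseteq> P" using F facet_of_imp_subset by blast
    have dF: "aff_dim F = int DIM('a) - 1" using F dP unfolding facet_of_def by simp
    have "NF F \<subseteq> {u0}"
    proof
      fix u assume u: "u \<in> NF F"
      obtain c where c: "P \<subseteq> {x. u \<bullet> x \<le> c}" "F \<subseteq> {x. u \<bullet> x = c}" using u NF_def by blast
      obtain d where d: "P \<subseteq> {x. u0 \<bullet> x \<le> d}" "F \<subseteq> {x. u0 \<bullet> x = d}" using u0 NF_def by blast
      have "u = u0" by (rule normal_unique[OF intP FP dF c d]) (use u u0 NF_def in auto)
      then show "u \<in> {u0}" by simp
    qed
    then show ?thesis using finite_subset by blast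
  qed
  moreover have "facet_normals P \<subseteq> (\<Union>F\<in>{F. F facet_of P}. NF F)"
    unfolding facet_normals_def NF_def by blast
  moreover have "finite (\<Union>F\<in>{F. F facet_of P}. NF F)"
    apply (rule finite_UN_I[OF finite_polytope_facets[OF pP]])
    using finNF by blast
  ultimately show finN: "finite (facet_normals P)"
    using finite_subset by blast
  have facF: "\<exists>F. F \<subseteq> P \<and> F \<subseteq> {y. w \<bullet> y = support_fun P w} \<and> aff_dim F = int DIM('a) - 1"
    if w: "w \<in> facet_normals P" for w
  proof -
    obtain F c where F: "F facet_of P" and Pc: "P \<subseteq> {x. w \<bullet> x \<le> c}" and Fc: "F \<subseteq> {x. w \<bullet> x = c}"
      using w unfolding facet_normals_def by blast
    have FP: "F \<subseteq> P" using F facet_of_imp_subset by blast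
    have Fne: "F \<noteq> {}" using F unfolding facet_of_def by blast
    have "support_fun P w \<le> c" by (rule support_least[OF Pne]) (use Pc in auto)
    moreover obtain f where "f \<in> F" using Fne by blast
    then have "c \<le> support_fun P w" using support_upper[OF bP] FP Fc by force
    ultimately have "c = support_fun P w" by simp
    then show ?thesis using F FP Fc dP unfolding facet_of_def by auto
  qed
  then show "\<forall>w\<in>facet_normals P. \<exists>F. F \<subseteq> P \<and> F \<subseteq> {y. w \<bullet> y = support_fun P w} \<and> aff_dim F = int DIM('a) - 1"
    by blast
  show "P = {y. \<forall>w\<in>facet_normals P. w \<bullet> y \<le> support_fun P w}"
  proof
    show "P \<subseteq> {y. \<forall>w\<in>facet_normals P. w \<bullet> y \<le> support_fun P w}"
      using support_upper[OF bP] by blast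
  next
    show "{y. \<forall>w\<in>facet_normals P. w \<bullet> y \<le> support_fun P w} \<subseteq> P"
    proof
      fix y assume y: "y \<in> {y. \<forall>w\<in>facet_normals P. w \<bullet> y \<le> support_fun P w}"
      have "polyhedron P" using pP polytope_imp_polyhedron by blast
      then obtain F where finF: "finite F" and seq: "P = affine hull P \<inter> \<Inter>F"
        and faces: "\<And>h. h \<in> F \<Longrightarrow> \<exists>a b. a \<noteq> 0 \<and> h = {x. a \<bullet> x \<le> b}"
        and min: "\<And>F'. F' \<subset> F \<Longrightarrow> P \<subset> (affine hull P) \<inter> \<Inter>F'"
        by (simp add: polyhedron_Int_affine_minimal) meson
      then obtain a b where ab: "\<And>h. h \<in> F \<Longrightarrow> a h \<noteq> 0 \<and> h = {x. a h \<bullet> x \<le> b h}"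
        by metis
      have "y \<in> h" if h: "h \<in> F" for h
      proof -
        have fac: "(P \<inter> {x. a h \<bullet> x = b h}) facet_of P"
          using facet_of_polyhedron_explicit[OF finF seq ab min] h by blast
        have Ph: "P \<subseteq> h" using h seq by blast
        define w where "w = (1 / norm (a h)) *\<^sub>R a h"
        have na: "norm (a h) > 0" using ab[OF h] by simp
        have nw: "norm w = 1" unfolding w_def using na by simp
        have Pw: "P \<subseteq> {x. w \<bullet> x \<le> b h / norm (a h)}"
          using Ph ab[OF h] na unfolding w_def by (auto simp: field_simps)
        have Fw: "P \<inter> {x. a h \<bullet> x = b h} \<subseteq> {x. w \<bullet> x = b h / norm (a h)}"
          using na unfolding w_def by (auto simp: field_simps)
        have wN: "w \<in> facet_normals P" unfolding facet_normals_def using nw fac Pw Fw by blast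
        have "support_fun P w \<le> b h / norm (a h)" by (rule support_least[OF Pne]) (use Pw in auto)
        then have "w \<bullet> y \<le> b h / norm (a h)" using y wN by force
        then have "a h \<bullet> y \<le> b h" using na unfolding w_def by (simp add: field_simps)
        then show ?thesis using ab[OF h] by blast
      qed
      then show "y \<in> P" using seq ahP by blast
    qed
  qed
qed

lemma simplex_weights:
  fixes X :: "'a::euclidean_space set"
  assumes "\<not> affine_dependent X" "0 \<in> rel_interior (convex hull X)"
  shows "\<exists>l. (\<forall>u\<in>X. 0 < l u) \<and> sum l X = 1 \<and> (\<Sum>u\<in>X. l u *\<^sub>R u) = 0"
  using assms rel_interior_convex_hull_explicit[OF assms(1)] by auto

lemma indep_minus_one:
  fixes X :: "'a::euclidean_space set"
  assumes fin: "finite X" and ad: "\<not> affine_dependent X" and l: "\<forall>u\<in>X. 0 < l u" "sum l X = 1"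
    "(\<Sum>u\<in>X. l u *\<^sub>R u) = 0" and a: "a \<in> X"
  shows "independent (X - {a})"
proof
  assume "dependent (X - {a})"
  then obtain c where c0: "\<exists>v\<in>X - {a}. c v \<noteq> 0" and cs: "(\<Sum>v\<in>X - {a}. c v *\<^sub>R v) = 0"
    using real_vector.dependent_finite[of "X - {a}"] fin by auto
  define c' where "c' v = (if v = a then 0 else c v)" for v
  define t where "t = sum c (X - {a})"
  define U where "U v = c' v - t * l v" for v
  have sc': "sum c' X = t"
  proof -
    have "sum c' X = c' a + sum c' (X - {a})" using fin a by (simp add: sum.remove)
    also have "\<dots> = sum c (X - {a})" unfolding c'_def by (auto intro: sum.cong)
    finally show ?thesis unfolding t_def .
  qed
  have vc': "(\<Sum>v\<in>X. c' v *\<^sub>R v) = 0"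
  proof -
    have "(\<Sum>v\<in>X. c' v *\<^sub>R v) = c' a *\<^sub>R a + (\<Sum>v\<in>X - {a}. c' v *\<^sub>R v)" using fin a by (simp add: sum.remove)
    also have "\<dots> = (\<Sum>v\<in>X - {a}. c v *\<^sub>R v)" unfolding c'_def by (auto intro: sum.cong)
    finally show ?thesis using cs by simp
  qed
  have "sum U X = 0" unfolding U_def using sc' l(2) by (simp add: sum_subtractf sum_distrib_left[symmetric])
  moreover have "(\<Sum>v\<in>X. U v *\<^sub>R v) = (\<Sum>v\<in>X. c' v *\<^sub>R v) - t *\<^sub>R (\<Sum>v\<in>X. l v *\<^sub>R v)"
    unfolding U_def by (simp add: scaleR_diff_left sum_subtractf scaleR_sum_right)
  then have "(\<Sum>v\<in>X. U v *\<^sub>R v) = 0" using vc' l(3) by simp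
  ultimately have U0: "\<forall>v\<in>X. U v = 0" using affine_dependent_explicit_finite[OF fin] ad by blast
  then have "U a = 0" using a by blast
  then have "t * l a = 0" by (simp add: U_def c'_def)
  then have "t = 0" using l(1) a by auto
  have "\<forall>v\<in>X - {a}. c v = 0"
  proof
    fix v assume v: "v \<in> X - {a}"
    then have "U v = 0" using U0 by blast
    then show "c v = 0" using v \<open>t = 0\<close> by (simp add: U_def c'_def)
  qed
  then show False using c0 by blast
qed

lemma solve_ones:
  fixes B :: "'a::euclidean_space set"
  assumes "independent B"
  shows "\<exists>r. \<forall>u\<in>B. u \<bullet> r = 1"
proof -
  obtain g :: "'a \<Rightarrow> real" where g: "linear g" "\<forall>x\<in>B. g x = 1"
    using real_vector.linear_independent_extend[OF assms, of "\<lambda>_. 1"] by blast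
  define r where "r = (\<Sum>b\<in>Basis. g b *\<^sub>R b)"
  have "u \<bullet> r = g u" for u
  proof -
    have "g u = g (\<Sum>b\<in>Basis. (u \<bullet> b) *\<^sub>R b)" by (simp add: euclidean_representation)
    also have "\<dots> = (\<Sum>b\<in>Basis. (u \<bullet> b) * g b)"
      using g(1) by (simp add: linear_sum linear_scale)
    also have "\<dots> = u \<bullet> r" unfolding r_def by (simp add: inner_sum_right mult.commute)
    finally show ?thesis by simp
  qed
  then show ?thesis using g(2) by (intro exI[of _ r]) auto
qed

lemma union_indep:
  fixes X :: "nat \<Rightarrow> 'a::euclidean_space set"
  assumes fin: "\<forall>i<k. finite (X i)" and disj: "\<forall>i<k. \<forall>j<k. i \<noteq> j \<longrightarrow> X i \<inter> X j = {}"
    and sig: "\<forall>i<k. s i \<in> X i" and ind: "\<forall>i<k. independent (X i - {s i})"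
    and ds: "\<forall>v. (\<forall>i<k. v i \<in> span (X i)) \<and> (\<Sum>i<k. v i) = 0 \<longrightarrow> (\<forall>i<k. v i = 0)"
  shows "independent (\<Union>i<k. X i - {s i})" "card (\<Union>i<k. X i - {s i}) = (\<Sum>i<k. card (X i) - 1)"
proof -
  define Y where "Y i = X i - {s i}" for i
  have finY: "\<forall>i\<in>{..<k}. finite (Y i)" using fin unfolding Y_def by auto
  have disjY: "\<forall>i\<in>{..<k}. \<forall>j\<in>{..<k}. i \<noteq> j \<longrightarrow> Y i \<inter> Y j = {}" using disj unfolding Y_def by auto
  have finB: "finite (\<Union>i<k. Y i)" using finY by auto
  show "card (\<Union>i<k. X i - {s i}) = (\<Sum>i<k. card (X i) - 1)"
    using card_UN_disjoint[of "{..<k}" Y] finY disjY fin sig unfolding Y_def by simp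
  show "independent (\<Union>i<k. X i - {s i})"
  proof
    assume "dependent (\<Union>i<k. X i - {s i})"
    then obtain c where c0: "\<exists>v\<in>(\<Union>i<k. Y i). c v \<noteq> 0" and cs: "(\<Sum>v\<in>(\<Union>i<k. Y i). c v *\<^sub>R v) = 0"
      using real_vector.dependent_finite[OF finB] unfolding Y_def by auto
    define vv where "vv i = (\<Sum>v\<in>Y i. c v *\<^sub>R v)" for i
    have "vv i \<in> span (X i)" for i
      unfolding vv_def Y_def by (intro span_sum span_scale span_base) auto
    moreover have "(\<Sum>i<k. vv i) = 0"
      using cs sum.UNION_disjoint[of "{..<k}" Y "\<lambda>v. c v *\<^sub>R v"] finY disjY unfolding vv_def by simp
    ultimately have vv0: "\<forall>i<k. vv i = 0" using ds by blast
    obtain i v where iv: "i < k" "v \<in> Y i" "c v \<noteq> 0" using c0 by blast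
    have "dependent (Y i)"
      using real_vector.dependent_finite[of "Y i"] finY iv vv0 unfolding vv_def by auto
    then show False using ind iv unfolding Y_def by blast
  qed
qed

lemma bounded_by_dots:
  fixes U S :: "'a::euclidean_space set"
  assumes finU: "finite U" and spU: "span U = UNIV" and K: "\<forall>z\<in>S. \<forall>u\<in>U. \<bar>u \<bullet> z\<bar> \<le> K"
  shows "bounded S"
proof -
  have "\<forall>b\<in>Basis. \<exists>\<beta>. b = (\<Sum>u\<in>U. \<beta> u *\<^sub>R u)"
  proof
    fix b :: 'a
    have "b \<in> span U" using spU by simp
    then show "\<exists>\<beta>. b = (\<Sum>u\<in>U. \<beta> u *\<^sub>R u)" unfolding span_finite[OF finU] by blast
  qed
  from bchoice[OF this] obtain \<beta> where \<beta>: "\<forall>b\<in>Basis. b = (\<Sum>u\<in>U. \<beta> b u *\<^sub>R u)" by blast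
  define M where "M = (\<Sum>b\<in>Basis. \<Sum>u\<in>U. \<bar>\<beta> b u\<bar> * K)"
  have "norm z \<le> M" if z: "z \<in> S" for z
  proof -
    have "\<bar>z \<bullet> b\<bar> \<le> (\<Sum>u\<in>U. \<bar>\<beta> b u\<bar> * K)" if b: "b \<in> Basis" for b
    proof -
      have "z \<bullet> b = (\<Sum>u\<in>U. \<beta> b u * (u \<bullet> z))"
        by (subst \<beta>[rule_format, OF b]) (simp add: inner_sum_right inner_commute)
      also have "\<bar>\<dots>\<bar> \<le> (\<Sum>u\<in>U. \<bar>\<beta> b u * (u \<bullet> z)\<bar>)" by (rule sum_abs)
      also have "\<dots> \<le> (\<Sum>u\<in>U. \<bar>\<beta> b u\<bar> * K)"
        using K z by (intro sum_mono) (auto simp: abs_mult intro: mult_left_mono)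
      finally show ?thesis .
    qed
    then have "(\<Sum>b\<in>Basis. \<bar>z \<bullet> b\<bar>) \<le> M" unfolding M_def by (intro sum_mono) auto
    then show ?thesis using norm_le_l1[of z] by linarith
  qed
  then show ?thesis unfolding bounded_iff by blast
qed

lemma block_lower:
  fixes X :: "'a::euclidean_space set"
  assumes fin: "finite X" and lp: "\<forall>v\<in>X. 0 < l v" and ls: "sum l X = 1"
    and lz: "(\<Sum>v\<in>X. l v *\<^sub>R v) = 0" and u: "u \<in> X" and c: "\<forall>v\<in>X. v \<bullet> z \<le> c"
  shows "- \<bar>c\<bar> \<le> l u * (u \<bullet> z)"
proof -
  have "(\<Sum>v\<in>X. l v * (v \<bullet> z)) = (\<Sum>v\<in>X. l v *\<^sub>R v) \<bullet> z" by (simp add: inner_sum_left)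
  then have s0: "(\<Sum>v\<in>X. l v * (v \<bullet> z)) = 0" using lz by simp
  have "(\<Sum>v\<in>X. l v * (v \<bullet> z)) = l u * (u \<bullet> z) + (\<Sum>v\<in>X - {u}. l v * (v \<bullet> z))"
    using fin u by (simp add: sum.remove)
  moreover have "(\<Sum>v\<in>X - {u}. l v * (v \<bullet> z)) \<le> (\<Sum>v\<in>X - {u}. l v * \<bar>c\<bar>)"
    using lp c by (intro sum_mono mult_left_mono) (auto intro: less_imp_le order_trans[OF _ abs_ge_self])
  moreover have "(\<Sum>v\<in>X - {u}. l v * \<bar>c\<bar>) \<le> (\<Sum>v\<in>X. l v * \<bar>c\<bar>)"
    using fin lp by (intro sum_mono2) auto
  moreover have "(\<Sum>v\<in>X. l v * \<bar>c\<bar>) = \<bar>c\<bar>" using ls by (simp add: sum_distrib_right[symmetric])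
  ultimately show ?thesis using s0 by linarith
qed

lemma block_nonpos:
  fixes X :: "'a::euclidean_space set"
  assumes fin: "finite X" and lp: "\<forall>v\<in>X. 0 < l v" and ls: "sum l X = 1"
    and lz: "(\<Sum>v\<in>X. l v *\<^sub>R v) = 0"
  shows "\<exists>u\<in>X. u \<bullet> z \<le> 0"
proof (rule ccontr)
  assume "\<not> (\<exists>u\<in>X. u \<bullet> z \<le> 0)"
  then have pos: "\<forall>u\<in>X. 0 < l u * (u \<bullet> z)" using lp by auto
  have Xne: "X \<noteq> {}" using ls by auto
  have "0 < (\<Sum>v\<in>X. l v * (v \<bullet> z))" using pos fin Xne by (intro sum_pos) auto
  moreover have "(\<Sum>v\<in>X. l v * (v \<bullet> z)) = (\<Sum>v\<in>X. l v *\<^sub>R v) \<bullet> z" by (simp add: inner_sum_left)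
  ultimately show False using lz by simp
qed

lemma pad_card:
  fixes S :: "'a::euclidean_space set"
  assumes "finite S" "card S \<le> m"
  shows "\<exists>V. finite V \<and> card V = m \<and> S \<subseteq> V"
proof -
  obtain b :: 'a where b: "b \<in> Basis" using nonempty_Basis by blast
  have "inj (\<lambda>r::real. r *\<^sub>R b)" using b by (auto simp: inj_on_def nonzero_Basis)
  moreover have "infinite (UNIV::real set)" by (rule infinite_UNIV_char_0)
  ultimately have "infinite (range (\<lambda>r::real. r *\<^sub>R b))" using finite_imageD by blast
  then have inf: "infinite (UNIV :: 'a set)" by (rule infinite_super[OF subset_UNIV])
  then have "infinite (UNIV - S)" using assms(1) by (simp add: Diff_infinite_finite)
  then obtain T where T: "finite T" "card T = m - card S" "T \<subseteq> UNIV - S"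
    using infinite_arbitrarily_large by blast
  have "card (S \<union> T) = card S + card T" using T assms(1) by (intro card_Un_disjoint) auto
  then show ?thesis using T assms by (intro exI[of _ "S \<union> T"]) auto
qed

lemma mono_aux:
  fixes p hh tn tm a :: real
  assumes "p \<le> hh" "p - tn * a < hh" "0 < tm" "tm \<le> tn"
  shows "p - tm * a < hh"
proof (cases "a \<le> 0")
  case True
  then have "tn * a \<le> tm * a" using assms(4) by (simp add: mult_right_mono_neg)
  then show ?thesis using assms(2) by linarith
next
  case False
  then have "0 < tm * a" using assms(3) by simp
  then show ?thesis using assms(1) by linarith
qed

lemma eventually_small:
  fixes a d :: real
  assumes "0 < d"
  shows "\<forall>\<^sub>F n in sequentially. (1 / (real n + 1)) * a < d"
proof -
  obtain N :: nat where N: "\<bar>a\<bar> / d < real N" using reals_Archimedean2 by blast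
  show ?thesis
  proof (rule eventually_sequentiallyI[of N])
    fix n assume n: "N \<le> n"
    have "real N \<le> real n" using n by simp
    then have "\<bar>a\<bar> / d < real n + 1" using N by linarith
    then have "\<bar>a\<bar> < d * (real n + 1)" using assms by (simp add: divide_less_eq mult.commute)
    then have "\<bar>a\<bar> / (real n + 1) < d" by (simp add: field_simps)
    moreover have "(1 / (real n + 1)) * a \<le> \<bar>a\<bar> / (real n + 1)" by (simp add: divide_right_mono)
    ultimately show "(1 / (real n + 1)) * a < d" by linarith
  qed
qed

lemma le_pow2_pred: "(n::nat) \<le> 2 ^ (n - 1)"
proof (cases n)
  case 0 then show ?thesis by simp
next
  case (Suc m)
  then show ?thesis using less_exp[of m] by (simp add: Suc_le_eq)
qed

definition Rset :: "'a::euclidean_space set \<Rightarrow> real \<Rightarrow> 'a set" where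
  "Rset U c = {z. \<forall>u\<in>U. u \<bullet> z \<le> c}"

definition rvec :: "'a::euclidean_space set \<Rightarrow> 'a" where
  "rvec B = (SOME r. \<forall>u\<in>B. u \<bullet> r = 1)"

lemma closed_Rset: "closed (Rset U c)"
proof -
  have "Rset U c = \<Inter>((\<lambda>u. {z. u \<bullet> z \<le> c}) ` U)" unfolding Rset_def by auto
  then show ?thesis by (simp add: closed_Inter closed_halfspace_le)
qed

context
  fixes P :: "'a::euclidean_space set" and X :: "nat \<Rightarrow> 'a set" and k :: nat
    and l :: "nat \<Rightarrow> 'a \<Rightarrow> real"
  assumes pP: "polytope P" and dP: "aff_dim P = int DIM('a)" and sm: "strongly_monotypic P"
    and XN: "\<forall>i<k. X i \<subseteq> facet_normals P"
    and disj: "\<forall>i<k. \<forall>j<k. i \<noteq> j \<longrightarrow> X i \<inter> X j = {}"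
    and finX: "\<forall>i<k. finite (X i)" and adX: "\<forall>i<k. \<not> affine_dependent (X i)"
    and lpos: "\<forall>i<k. \<forall>u\<in>X i. 0 < l i u" and lsum: "\<forall>i<k. sum (l i) (X i) = 1"
    and lz: "\<forall>i<k. (\<Sum>u\<in>X i. l i u *\<^sub>R u) = 0"
    and ds: "\<forall>v. (\<forall>i<k. v i \<in> span (X i)) \<and> (\<Sum>i<k. v i) = 0 \<longrightarrow> (\<forall>i<k. v i = 0)"
    and spn: "\<forall>y. \<exists>v. (\<forall>i<k. v i \<in> span (X i)) \<and> y = (\<Sum>i<k. v i)"
begin

lemma U_finite: "finite (\<Union>i<k. X i)"
  using finX by auto

lemma U_span: "span (\<Union>i<k. X i) = UNIV"
proof -
  have "y \<in> span (\<Union>i<k. X i)" for y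
  proof -
    obtain v where v: "\<forall>i<k. v i \<in> span (X i)" "y = (\<Sum>i<k. v i)" using spn by blast
    have "v i \<in> span (\<Union>i<k. X i)" if "i < k" for i
      using v(1) that span_mono[of "X i" "\<Union>i<k. X i"] by blast
    then show ?thesis unfolding v(2) by (intro span_sum) auto
  qed
  then show ?thesis by auto
qed

lemma U_unit: "u \<in> (\<Union>i<k. X i) \<Longrightarrow> norm u = 1"
  using XN unfolding facet_normals_def by blast

lemma R_bounded: "bounded (Rset (\<Union>i<k. X i) c)"
proof -
  define K where "K = \<bar>c\<bar> * (1 + (\<Sum>i<k. \<Sum>u\<in>X i. 1 / l i u))"
  have "\<bar>u \<bullet> z\<bar> \<le> K" if z: "z \<in> Rset (\<Union>i<k. X i) c" and u: "u \<in> (\<Union>i<k. X i)" for z u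
  proof -
    obtain i where i: "i < k" "u \<in> X i" using u by blast
    have up: "u \<bullet> z \<le> c" using z u unfolding Rset_def by blast
    have lu: "0 < l i u" using lpos i by blast
    have lc: "- \<bar>c\<bar> \<le> l i u * (u \<bullet> z)"
      by (rule block_lower[of "X i" "l i"]) (use finX lpos lsum lz i z in \<open>auto simp: Rset_def\<close>)
    have "(- \<bar>c\<bar>) / l i u \<le> u \<bullet> z"
      apply (rule pos_divide_le_eq[OF lu, THEN iffD2]) using lc by (simp add: mult.commute)
    then have lo: "- (\<bar>c\<bar> / l i u) \<le> u \<bullet> z" by simp
    have lp': "\<forall>x\<in>X i. 0 < l i x" using lpos i by blast
    have "1 / l i u \<le> (\<Sum>u\<in>X i. 1 / l i u)"
      using finX lp' i by (intro member_le_sum) (auto intro: less_imp_le)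
    also have "\<dots> \<le> (\<Sum>i<k. \<Sum>u\<in>X i. 1 / l i u)"
      using i by (intro member_le_sum[of i "{..<k}" "\<lambda>i. \<Sum>u\<in>X i. 1 / l i u"] sum_nonneg)
        (use lpos in \<open>auto intro: less_imp_le\<close>)
    finally have s1: "1 / l i u \<le> (\<Sum>i<k. \<Sum>u\<in>X i. 1 / l i u)" .
    have sn: "0 \<le> (\<Sum>i<k. \<Sum>u\<in>X i. 1 / l i u)" using lpos by (intro sum_nonneg) (auto intro: less_imp_le)
    have "\<bar>c\<bar> / l i u = \<bar>c\<bar> * (1 / l i u)" by simp
    also have "\<dots> \<le> \<bar>c\<bar> * (\<Sum>i<k. \<Sum>u\<in>X i. 1 / l i u)" using s1 by (intro mult_left_mono) auto
    also have "\<dots> \<le> K" unfolding K_def by (simp add: distrib_left)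
    finally have a1: "\<bar>c\<bar> / l i u \<le> K" .
    have a2: "\<bar>c\<bar> \<le> K" unfolding K_def using sn by (simp add: distrib_left)
    show ?thesis using up lo a1 a2 by (auto simp: abs_le_iff)
  qed
  then show ?thesis by (intro bounded_by_dots[OF U_finite U_span]) blast
qed

lemma B_indep:
  assumes "\<sigma> \<in> PiE {..<k} X"
  shows "independent (\<Union>i<k. X i - {\<sigma> i})" "card (\<Union>i<k. X i - {\<sigma> i}) = (\<Sum>i<k. card (X i) - 1)"
proof -
  have sig: "\<forall>i<k. \<sigma> i \<in> X i" using assms by auto
  have ind: "\<forall>i<k. independent (X i - {\<sigma> i})"
  proof (intro allI impI)
    fix i assume i: "i < k"
    show "independent (X i - {\<sigma> i})"
      by (rule indep_minus_one[of "X i" "l i"]) (use finX adX lpos lsum lz sig i in auto)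
  qed
  show "independent (\<Union>i<k. X i - {\<sigma> i})" "card (\<Union>i<k. X i - {\<sigma> i}) = (\<Sum>i<k. card (X i) - 1)"
    using union_indep[OF finX disj sig ind ds] by auto
qed

lemma rvec_prop:
  assumes "\<sigma> \<in> PiE {..<k} X"
  shows "\<forall>u\<in>(\<Union>i<k. X i - {\<sigma> i}). u \<bullet> rvec (\<Union>i<k. X i - {\<sigma> i}) = 1"
  unfolding rvec_def by (rule someI_ex[OF solve_ones[OF B_indep(1)[OF assms]]])


lemma key:
  assumes xP: "x \<in> P"
  shows "\<exists>\<sigma>\<in>PiE {..<k} X. \<forall>w\<in>facet_normals P. w \<bullet> x = support_fun P w \<longrightarrow>
            1/4 \<le> w \<bullet> rvec (\<Union>i<k. X i - {\<sigma> i})"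
proof -
  define N where "N = facet_normals P"
  define h where "h = support_fun P"
  define U where "U = (\<Union>i<k. X i)"
  define R where "R = Rset U 1"
  define hR where "hR = support_fun R"
  define Sig where "Sig = PiE {..<k} X"
  define r where "r \<sigma> = rvec (\<Union>i<k. X i - {\<sigma> i})" for \<sigma>
  note PR = polytope_rep[OF pP dP]
  have finN: "finite N" and unitN: "\<forall>w\<in>N. norm w = 1" and Prep: "P = {y. \<forall>w\<in>N. w \<bullet> y \<le> h w}"
    and facP: "\<forall>w\<in>N. \<exists>F. F \<subseteq> P \<and> F \<subseteq> {y. w \<bullet> y = h w} \<and> aff_dim F = int DIM('a) - 1"
    and intP: "interior P \<noteq> {}" and bP: "bounded P" and Pne: "P \<noteq> {}"
    using PR unfolding N_def h_def by auto
  have UN: "U \<subseteq> N" using XN unfolding U_def N_def by blast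
  have finU: "finite U" unfolding U_def using U_finite .
  have bR: "bounded R" unfolding R_def U_def by (rule R_bounded)
  have R0: "0 \<in> R" unfolding R_def Rset_def by simp
  have Rne: "R \<noteq> {}" using R0 by blast
  have cR: "compact R" using bR closed_Rset unfolding R_def by (simp add: compact_eq_bounded_closed)
  have hR_half: "1/2 \<le> hR w" if nw: "norm w = 1" for w
  proof -
    have "(1/2) *\<^sub>R w \<in> R" unfolding R_def Rset_def
    proof (intro CollectI ballI)
      fix u assume "u \<in> U"
      then have "norm u = 1" using UN unitN by blast
      then have "u \<bullet> w \<le> 1" using norm_cauchy_schwarz[of u w] nw by simp
      then show "u \<bullet> ((1/2) *\<^sub>R w) \<le> 1" by simp
    qed
    then have "w \<bullet> ((1/2) *\<^sub>R w) \<le> hR w" unfolding hR_def by (rule support_upper[OF bR])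
    moreover have "w \<bullet> w = 1" using nw by (simp add: norm_eq_1)
    ultimately show ?thesis by simp
  qed
  have hR_nonneg: "0 \<le> hR w" for w
    using support_upper[OF bR R0, of w] unfolding hR_def by simp
  have hR_U: "hR u \<le> 1" if "u \<in> U" for u
    unfolding hR_def by (rule support_least[OF Rne]) (use that in \<open>auto simp: R_def Rset_def\<close>)
  have zmax: "\<exists>zw\<in>R. w \<bullet> zw = hR w" for w
  proof -
    have "continuous_on R (\<lambda>y. w \<bullet> y)" by (intro continuous_on_inner continuous_on_const continuous_on_id)
    then obtain zw where zw: "zw \<in> R" "\<forall>y\<in>R. w \<bullet> y \<le> w \<bullet> zw"
      using continuous_attains_sup[OF cR Rne, of "\<lambda>y. w \<bullet> y"] by blast
    have "hR w = w \<bullet> zw" unfolding hR_def support_fun_def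
      by (rule cSup_eq_maximum) (use zw in auto)
    then show ?thesis using zw by auto
  qed
  have finSig: "finite Sig" unfolding Sig_def using finX by (intro finite_PiE) auto
  define \<rho> where "\<rho> = (\<Sum>\<sigma>\<in>Sig. norm (r \<sigma>)) + 1"
  have rho_ge: "norm (r \<sigma>) \<le> \<rho> - 1" if "\<sigma> \<in> Sig" for \<sigma>
  proof -
    have "norm (r \<sigma>) \<le> (\<Sum>\<sigma>\<in>Sig. norm (r \<sigma>))" by (rule member_le_sum) (use that finSig in auto)
    then show ?thesis unfolding \<rho>_def by simp
  qed
  have rho1: "1 \<le> \<rho>" unfolding \<rho>_def by (simp add: sum_nonneg)
  define D where "D = (\<Sum>u\<in>U. \<bar>h u - u \<bullet> x\<bar>) + 1"
  have D1: "1 \<le> D" unfolding D_def by (simp add: sum_nonneg)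
  have Dge: "h u - u \<bullet> x \<le> D" if "u \<in> U" for u
  proof -
    have "\<bar>h u - u \<bullet> x\<bar> \<le> (\<Sum>u\<in>U. \<bar>h u - u \<bullet> x\<bar>)" using finU that by (intro member_le_sum) auto
    then show ?thesis unfolding D_def by linarith
  qed
  define \<epsilon> where "\<epsilon> = 1 / \<rho>"
  define s where "s = 4 * D * \<rho> + 1"
  have s0: "0 < s" unfolding s_def using D1 rho1 by (simp add: add_pos_nonneg)
  have eps0: "0 < \<epsilon>" and eps1: "\<epsilon> \<le> 1" unfolding \<epsilon>_def using rho1 by auto
  define b where "b w = h w + s * hR w" for w
  define Q where "Q = {y. \<forall>w\<in>N. w \<bullet> y \<le> b w}"
  have bQ: "bounded Q"
  proof -
    define C where "C = (\<Sum>u\<in>U. \<bar>h u\<bar>) + s"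
    have "Q \<subseteq> Rset U C"
    proof
      fix y assume y: "y \<in> Q"
      show "y \<in> Rset U C" unfolding Rset_def
      proof (intro CollectI ballI)
        fix u assume u: "u \<in> U"
        have "u \<bullet> y \<le> h u + s * hR u" using y u UN unfolding Q_def b_def by blast
        also have "\<dots> \<le> \<bar>h u\<bar> + s" using hR_U[OF u] s0
          by (smt (verit) mult_left_le)
        also have "\<dots> \<le> C"
        proof -
          have "\<bar>h u\<bar> \<le> (\<Sum>u\<in>U. \<bar>h u\<bar>)" by (rule member_le_sum) (use u finU in auto)
          then show ?thesis unfolding C_def by simp
        qed
        finally show "u \<bullet> y \<le> C" .
      qed
    qed
    moreover have "bounded (Rset U C)" unfolding U_def by (rule R_bounded)
    ultimately show ?thesis using bounded_subset by blast
  qed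
  have PQ: "P \<subseteq> Q"
  proof
    fix y assume "y \<in> P"
    then have "\<forall>w\<in>N. w \<bullet> y \<le> h w" using Prep by blast
    then show "y \<in> Q" unfolding Q_def b_def using hR_nonneg s0
      by (smt (verit) mem_Collect_eq mult_nonneg_nonneg)
  qed
  have intQ: "interior Q \<noteq> {}" using intP interior_mono[OF PQ] by blast
  have facQ: "\<forall>w\<in>N. \<exists>F. F \<subseteq> Q \<and> F \<subseteq> {y. w \<bullet> y = b w} \<and> aff_dim F = int DIM('a) - 1"
  proof
    fix w assume w: "w \<in> N"
    obtain F where F: "F \<subseteq> P" "F \<subseteq> {y. w \<bullet> y = h w}" "aff_dim F = int DIM('a) - 1"
      using facP w by blast
    obtain zw where zw: "zw \<in> R" "w \<bullet> zw = hR w" using zmax by blast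
    define F' where "F' = (+) (s *\<^sub>R zw) ` F"
    have "F' \<subseteq> Q"
    proof
      fix y assume "y \<in> F'"
      then obtain f where f: "f \<in> F" "y = s *\<^sub>R zw + f" unfolding F'_def by blast
      have "w' \<bullet> y \<le> b w'" if w': "w' \<in> N" for w'
      proof -
        have "w' \<bullet> f \<le> h w'" using f F(1) Prep w' by blast
        moreover have "w' \<bullet> zw \<le> hR w'" unfolding hR_def by (rule support_upper[OF bR zw(1)])
        then have "s * (w' \<bullet> zw) \<le> s * hR w'" using s0 by simp
        ultimately show ?thesis unfolding f(2) b_def by (simp add: inner_add_right)
      qed
      then show "y \<in> Q" unfolding Q_def by blast
    qed
    moreover have "F' \<subseteq> {y. w \<bullet> y = b w}"
      using F(2) zw unfolding F'_def b_def by (auto simp: inner_add_right)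
    moreover have "aff_dim F' = int DIM('a) - 1" unfolding F'_def using F(3) by (simp add: aff_dim_translation_eq)
    ultimately show "\<exists>F. F \<subseteq> Q \<and> F \<subseteq> {y. w \<bullet> y = b w} \<and> aff_dim F = int DIM('a) - 1" by blast
  qed
  note QF = facet_normals_explicit[OF Q_def finN unitN bQ intQ facQ]
  have "arrangement_comb_equiv P Q" using sm QF unfolding strongly_monotypic_def N_def by blast
  then have sgs: "arrangement_signs P = arrangement_signs Q" unfolding arrangement_comb_equiv_def .
  define sx where "sx = (\<lambda>u. if u \<in> facet_normals P then sgn (u \<bullet> x - support_fun P u) else 0)"
  have "sx \<in> arrangement_signs P" unfolding arrangement_signs_def sx_def by blast
  then have "sx \<in> arrangement_signs Q" using sgs by simp
  then obtain y where y: "sx = (\<lambda>u. if u \<in> facet_normals Q then sgn (u \<bullet> y - support_fun Q u) else 0)"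
    unfolding arrangement_signs_def by blast
  have sgn_eq: "sgn (w \<bullet> x - h w) = sgn (w \<bullet> y - b w)" if w: "w \<in> N" for w
  proof -
    have "sx w = sgn (w \<bullet> y - support_fun Q w)" using y w QF(2) by simp
    then show ?thesis using w QF(3) unfolding sx_def N_def h_def by simp
  qed
  define z where "z = (1/s) *\<^sub>R (y - x)"
  have zA: "w \<bullet> z = hR w" if w: "w \<in> N" and act: "w \<bullet> x = h w" for w
  proof -
    have "sgn (w \<bullet> y - b w) = 0" using sgn_eq[OF w] act by simp
    then have "w \<bullet> y = h w + s * hR w" unfolding b_def by (simp add: sgn_if split: if_splits)
    then have "w \<bullet> (y - x) = s * hR w" using act by (simp add: inner_diff_right)
    then show ?thesis unfolding z_def using s0 by simp
  qed
  have zU: "u \<bullet> z \<le> 1 + D / s" if u: "u \<in> U" for u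
  proof -
    have uN: "u \<in> N" using u UN by blast
    have "u \<bullet> x \<le> h u" using xP Prep uN by blast
    then have "sgn (u \<bullet> x - h u) \<le> 0" by (simp add: sgn_if)
    then have "sgn (u \<bullet> y - b u) \<le> 0" using sgn_eq[OF uN] by simp
    then have "u \<bullet> y \<le> b u" by (simp add: sgn_if split: if_splits)
    also have "b u \<le> h u + s" unfolding b_def using hR_U[OF u] s0 by simp
    finally have "u \<bullet> (y - x) \<le> (h u - u \<bullet> x) + s" by (simp add: inner_diff_right)
    also have "\<dots> \<le> D + s" using Dge[OF u] by simp
    finally have "u \<bullet> (y - x) / s \<le> (D + s) / s" using s0 by (simp add: divide_right_mono)
    moreover have "(D + s) / s = 1 + D / s" using s0 by (simp add: field_simps)
    ultimately show ?thesis unfolding z_def by simp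
  qed
  have blk: "\<exists>u\<in>X i. u \<bullet> z \<le> 0" if i: "i < k" for i
    by (rule block_nonpos[of "X i" "l i"]) (use finX lpos lsum lz i in auto)
  define \<sigma> where "\<sigma> = restrict (\<lambda>i. SOME u. u \<in> X i \<and> u \<bullet> z \<le> 0) {..<k}"
  have sig: "\<sigma> i \<in> X i \<and> \<sigma> i \<bullet> z \<le> 0" if i: "i < k" for i
    using someI_ex[OF blk[OF i, unfolded Bex_def]] i unfolding \<sigma>_def by simp
  have sigS: "\<sigma> \<in> Sig" unfolding Sig_def \<sigma>_def using sig by (auto simp: \<sigma>_def)
  define rr where "rr = r \<sigma>"
  have rr1: "\<forall>u\<in>(\<Union>i<k. X i - {\<sigma> i}). u \<bullet> rr = 1"
    unfolding rr_def r_def using rvec_prop sigS unfolding Sig_def by blast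
  have nrr: "norm rr \<le> \<rho> - 1" unfolding rr_def using rho_ge[OF sigS] .
  define z' where "z' = (1 + \<epsilon>) *\<^sub>R z - \<epsilon> *\<^sub>R rr"
  define cc where "cc = 1 + 2 * D / s"
  have cc0: "0 < cc" unfolding cc_def using D1 s0 by (simp add: add_pos_nonneg)
  have z'U: "u \<bullet> z' \<le> cc" if u: "u \<in> U" for u
  proof -
    obtain i where i: "i < k" "u \<in> X i" using u unfolding U_def by blast
    have Ds: "0 \<le> D / s" using D1 s0 by simp
    show ?thesis
    proof (cases "u = \<sigma> i")
      case True
      then have uz: "u \<bullet> z \<le> 0" using sig[OF i(1)] by simp
      have "norm u = 1" using u UN unitN by blast
      then have "- (u \<bullet> rr) \<le> norm rr" using Cauchy_Schwarz_ineq2[of u rr] by simp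
      then have "\<epsilon> * (- (u \<bullet> rr)) \<le> \<epsilon> * norm rr" using eps0 by (intro mult_left_mono) auto
      then have "- (\<epsilon> * (u \<bullet> rr)) \<le> \<epsilon> * norm rr" by simp
      also have "\<epsilon> * norm rr \<le> \<epsilon> * (\<rho> - 1)" using nrr eps0 by (simp add: mult_left_mono)
      also have "\<epsilon> * (\<rho> - 1) \<le> 1" unfolding \<epsilon>_def using rho1 by (simp add: field_simps)
      finally have a: "- (\<epsilon> * (u \<bullet> rr)) \<le> 1" .
      have "(1 + \<epsilon>) * (u \<bullet> z) \<le> 0" using uz eps0 by (simp add: mult_nonneg_nonpos)
      then have "u \<bullet> z' \<le> 1" unfolding z'_def using a by (simp add: inner_diff_right)
      then show ?thesis unfolding cc_def using Ds by simp
    next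
      case False
      then have "u \<bullet> rr = 1" using rr1 i by blast
      then have e: "u \<bullet> z' = (1 + \<epsilon>) * (u \<bullet> z) - \<epsilon>" unfolding z'_def by (simp add: inner_diff_right)
      have "(1 + \<epsilon>) * (u \<bullet> z) \<le> (1 + \<epsilon>) * (1 + D / s)" using zU[OF u] eps0 by (simp add: mult_left_mono)
      moreover have "(1 + \<epsilon>) * (D / s) \<le> 2 * (D / s)" using eps1 Ds by (intro mult_right_mono) auto
      ultimately have "u \<bullet> z' \<le> 1 + 2 * (D / s)" using e by (simp add: algebra_simps)
      then show ?thesis unfolding cc_def by simp
    qed
  qed
  have z'R: "w \<bullet> z' \<le> cc * hR w" for w
  proof -
    have "(1 / cc) *\<^sub>R z' \<in> R" unfolding R_def Rset_def
    proof (intro CollectI ballI)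
      fix u assume "u \<in> U"
      then have "u \<bullet> z' \<le> cc" by (rule z'U)
      then show "u \<bullet> ((1 / cc) *\<^sub>R z') \<le> 1" using cc0 by (simp add: divide_le_eq)
    qed
    then have "w \<bullet> ((1 / cc) *\<^sub>R z') \<le> hR w" unfolding hR_def by (rule support_upper[OF bR])
    then have "(w \<bullet> z') / cc \<le> hR w" by simp
    then show ?thesis using cc0 by (simp add: divide_le_eq mult.commute)
  qed
  have Deps: "2 * D / s \<le> \<epsilon> / 2"
  proof -
    have "4 * D * \<rho> \<le> s" unfolding s_def by simp
    then have "2 * D * \<rho> * 2 \<le> s" by simp
    then show ?thesis unfolding \<epsilon>_def using s0 rho1 by (simp add: field_simps)
  qed
  have "1/4 \<le> w \<bullet> rr" if w: "w \<in> N" and act: "w \<bullet> x = h w" for w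
  proof -
    have hw: "1/2 \<le> hR w" using hR_half unitN w by blast
    have "\<epsilon> * (w \<bullet> rr) = (1 + \<epsilon>) * (w \<bullet> z) - w \<bullet> z'" unfolding z'_def by (simp add: inner_diff_right)
    also have "\<dots> = (1 + \<epsilon>) * hR w - w \<bullet> z'" using zA[OF w act] by simp
    also have "\<dots> \<ge> (1 + \<epsilon>) * hR w - cc * hR w" using z'R[of w] by simp
    finally have "\<epsilon> * (w \<bullet> rr) \<ge> (\<epsilon> - 2 * D / s) * hR w" unfolding cc_def by (simp add: algebra_simps)
    moreover have "(\<epsilon> - 2 * D / s) * hR w \<ge> (\<epsilon> / 2) * hR w" using Deps hR_nonneg[of w] by (intro mult_right_mono) auto
    moreover have "(\<epsilon> / 2) * hR w \<ge> \<epsilon> / 4"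
    proof -
      have "(\<epsilon> / 2) * (1/2) \<le> (\<epsilon> / 2) * hR w" using hw eps0 by (intro mult_left_mono) auto
      then show ?thesis by simp
    qed
    ultimately have "\<epsilon> * (w \<bullet> rr) \<ge> \<epsilon> * (1/4)" by simp
    then show ?thesis using eps0 by simp
  qed
  then show ?thesis using sigS unfolding Sig_def rr_def r_def N_def h_def by blast
qed


lemma uniform:
  "\<exists>t>0. \<forall>x\<in>P. \<exists>\<sigma>\<in>PiE {..<k} X. \<forall>w\<in>facet_normals P.
      w \<bullet> x - t * (w \<bullet> rvec (\<Union>i<k. X i - {\<sigma> i}) - 1/8) < support_fun P w"
proof -
  define N where "N = facet_normals P"
  define h where "h = support_fun P"
  define Sig where "Sig = PiE {..<k} X"
  define r where "r \<sigma> = rvec (\<Union>i<k. X i - {\<sigma> i})" for \<sigma>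
  note PR = polytope_rep[OF pP dP]
  have finN: "finite N" and Prep: "P = {y. \<forall>w\<in>N. w \<bullet> y \<le> h w}"
    using PR unfolding N_def h_def by auto
  have finSig: "finite Sig" unfolding Sig_def using finX by (intro finite_PiE) auto
  define tn where "tn n = 1 / (real n + 1)" for n :: nat
  have tn0: "0 < tn n" for n unfolding tn_def by simp
  define Uo where "Uo n = {x. \<exists>\<sigma>\<in>Sig. \<forall>w\<in>N. w \<bullet> x - tn n * (w \<bullet> r \<sigma> - 1/8) < h w}" for n
  have opn: "open (Uo n)" for n
  proof -
    have "Uo n = (\<Union>\<sigma>\<in>Sig. \<Inter>w\<in>N. {x. w \<bullet> x < h w + tn n * (w \<bullet> r \<sigma> - 1/8)})"
      unfolding Uo_def by (auto simp: algebra_simps)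
    moreover have "open (\<Union>\<sigma>\<in>Sig. \<Inter>w\<in>N. {x. w \<bullet> x < h w + tn n * (w \<bullet> r \<sigma> - 1/8)})"
      using finN by (intro open_UN ballI open_INT) (auto simp: open_halfspace_lt)
    ultimately show ?thesis by simp
  qed
  have cov: "P \<subseteq> (\<Union>n\<in>UNIV. Uo n)"
  proof
    fix x assume xP: "x \<in> P"
    obtain \<sigma> where \<sigma>: "\<sigma> \<in> Sig" and act: "\<forall>w\<in>N. w \<bullet> x = h w \<longrightarrow> 1/4 \<le> w \<bullet> r \<sigma>"
      using key[OF xP] unfolding Sig_def N_def h_def r_def by blast
    have "\<forall>w\<in>N. \<forall>\<^sub>F n in sequentially. w \<bullet> x - tn n * (w \<bullet> r \<sigma> - 1/8) < h w"
    proof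
      fix w assume w: "w \<in> N"
      have le: "w \<bullet> x \<le> h w" using xP Prep w by blast
      show "\<forall>\<^sub>F n in sequentially. w \<bullet> x - tn n * (w \<bullet> r \<sigma> - 1/8) < h w"
      proof (cases "w \<bullet> x = h w")
        case True
        then have a: "0 < w \<bullet> r \<sigma> - 1/8" using act w by fastforce
        have "w \<bullet> x - tn n * (w \<bullet> r \<sigma> - 1/8) < h w" for n
          using True tn0[of n] a by (simp add: mult_pos_pos)
        then show ?thesis by simp
      next
        case False
        then have d: "0 < h w - w \<bullet> x" using le by simp
        have "\<forall>\<^sub>F n in sequentially. (1 / (real n + 1)) * (- (w \<bullet> r \<sigma> - 1/8)) < h w - w \<bullet> x"
          by (rule eventually_small[OF d])
        then show ?thesis
        proof (rule eventually_mono)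
          fix n assume H: "(1 / (real n + 1)) * (- (w \<bullet> r \<sigma> - 1/8)) < h w - w \<bullet> x"
          have "(1 / (real n + 1)) * (- (w \<bullet> r \<sigma> - 1/8)) = - (tn n * (w \<bullet> r \<sigma> - 1/8))"
            unfolding tn_def by (simp add: field_simps)
          then show "w \<bullet> x - tn n * (w \<bullet> r \<sigma> - 1/8) < h w" using H by linarith
        qed
      qed
    qed
    then have "\<forall>\<^sub>F n in sequentially. \<forall>w\<in>N. w \<bullet> x - tn n * (w \<bullet> r \<sigma> - 1/8) < h w"
      by (rule eventually_ball_finite[OF finN])
    then obtain n where "\<forall>w\<in>N. w \<bullet> x - tn n * (w \<bullet> r \<sigma> - 1/8) < h w"
      unfolding eventually_sequentially by blast
    then have "x \<in> Uo n" unfolding Uo_def using \<sigma> by blast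
    then show "x \<in> (\<Union>n\<in>UNIV. Uo n)" by blast
  qed
  have cP: "compact P" using pP polytope_imp_compact by blast
  have "\<exists>C'. C' \<subseteq> UNIV \<and> finite C' \<and> P \<subseteq> (\<Union>n\<in>C'. Uo n)"
    by (rule compactE_image[OF cP, of UNIV Uo]) (use opn cov in auto)
  then obtain C' where C': "C' \<subseteq> UNIV" "finite C'" "P \<subseteq> (\<Union>n\<in>C'. Uo n)" by blast
  define m where "m = Max (insert 0 C')"
  have nm: "n \<le> m" if "n \<in> C'" for n unfolding m_def using C'(2) that by simp
  have "\<forall>x\<in>P. \<exists>\<sigma>\<in>Sig. \<forall>w\<in>N. w \<bullet> x - tn m * (w \<bullet> r \<sigma> - 1/8) < h w"
  proof
    fix x assume xP: "x \<in> P"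
    then obtain n where n: "n \<in> C'" "x \<in> Uo n" using C'(3) by blast
    then obtain \<sigma> where \<sigma>: "\<sigma> \<in> Sig" "\<forall>w\<in>N. w \<bullet> x - tn n * (w \<bullet> r \<sigma> - 1/8) < h w"
      unfolding Uo_def by blast
    have tmn: "tn m \<le> tn n" unfolding tn_def using nm[OF n(1)] by (simp add: frac_le)
    have "\<forall>w\<in>N. w \<bullet> x - tn m * (w \<bullet> r \<sigma> - 1/8) < h w"
    proof
      fix w assume w: "w \<in> N"
      show "w \<bullet> x - tn m * (w \<bullet> r \<sigma> - 1/8) < h w"
        by (rule mono_aux[of _ _ "tn n"]) (use xP Prep w \<sigma> tn0 tmn in auto)
    qed
    then show "\<exists>\<sigma>\<in>Sig. \<forall>w\<in>N. w \<bullet> x - tn m * (w \<bullet> r \<sigma> - 1/8) < h w" using \<sigma> by blast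
  qed
  then have "\<forall>x\<in>P. \<exists>\<sigma>\<in>PiE {..<k} X. \<forall>w\<in>facet_normals P.
      w \<bullet> x - tn m * (w \<bullet> rvec (\<Union>i<k. X i - {\<sigma> i}) - 1/8) < support_fun P w"
    unfolding Sig_def N_def h_def r_def .
  then show ?thesis using tn0[of m] by (intro exI[of _ "tn m"]) simp
qed

lemma main_result:
  "(\<exists>V. finite V \<and> card V = (\<Prod>i<k. card (X i)) \<and>
            (\<forall>x\<in>frontier P. \<exists>v\<in>V. x - v \<in> interior P))
       \<and> (\<Prod>i<k. card (X i)) \<le> 2 ^ DIM('a)
       \<and> (\<exists>\<epsilon>>0. \<exists>T. finite T \<and> card T \<le> 2 ^ DIM('a) \<and>
            P \<subseteq> (\<Union>t\<in>T. (\<lambda>x. t + (1 - \<epsilon>) *\<^sub>R x) ` P))"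
proof -
  define N where "N = facet_normals P"
  define h where "h = support_fun P"
  define Sig where "Sig = PiE {..<k} X"
  define r where "r \<sigma> = rvec (\<Union>i<k. X i - {\<sigma> i})" for \<sigma>
  note PR = polytope_rep[OF pP dP]
  have finN: "finite N" and Prep: "P = {y. \<forall>w\<in>N. w \<bullet> y \<le> h w}"
    using PR unfolding N_def h_def by auto
  have finSig: "finite Sig" unfolding Sig_def using finX by (intro finite_PiE) auto
  have cardSig: "card Sig = (\<Prod>i<k. card (X i))" unfolding Sig_def by (simp add: card_PiE)
  obtain t where t0: "0 < t" and tP: "\<forall>x\<in>P. \<exists>\<sigma>\<in>Sig. \<forall>w\<in>N. w \<bullet> x - t * (w \<bullet> r \<sigma> - 1/8) < h w"
    using uniform unfolding Sig_def N_def h_def r_def by blast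
  define V0 where "V0 = (\<lambda>\<sigma>. t *\<^sub>R r \<sigma>) ` Sig"
  have finV0: "finite V0" unfolding V0_def using finSig by simp
  have cV0: "card V0 \<le> (\<Prod>i<k. card (X i))" unfolding V0_def using card_image_le[OF finSig] cardSig by simp
  define Opn where "Opn = (\<Inter>w\<in>N. {y. w \<bullet> y < h w})"
  have oO: "open Opn" unfolding Opn_def using finN by (intro open_INT) (auto simp: open_halfspace_lt)
  have sO: "Opn \<subseteq> P" unfolding Opn_def by (subst Prep) (auto intro: less_imp_le)
  have OpnI: "Opn \<subseteq> interior P" by (rule interior_maximal[OF sO oO])
  have good: "x - t *\<^sub>R r \<sigma> \<in> interior P"
    if "\<forall>w\<in>N. w \<bullet> x - t * (w \<bullet> r \<sigma> - 1/8) < h w" for x \<sigma>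
  proof -
    have "x - t *\<^sub>R r \<sigma> \<in> Opn" unfolding Opn_def
    proof (intro InterI, clarsimp)
      fix w assume w: "w \<in> N"
      have "w \<bullet> x - t * (w \<bullet> r \<sigma> - 1/8) < h w" using that w by blast
      then show "w \<bullet> (x - t *\<^sub>R r \<sigma>) < h w" using t0 by (simp add: inner_diff_right algebra_simps)
    qed
    then show ?thesis using OpnI by blast
  qed
  have part1: "\<exists>V. finite V \<and> card V = (\<Prod>i<k. card (X i)) \<and> (\<forall>x\<in>frontier P. \<exists>v\<in>V. x - v \<in> interior P)"
  proof -
    obtain V where V: "finite V" "card V = (\<Prod>i<k. card (X i))" "V0 \<subseteq> V"
      using pad_card[OF finV0 cV0] by blast
    have "\<forall>x\<in>frontier P. \<exists>v\<in>V. x - v \<in> interior P"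
    proof
      fix x assume "x \<in> frontier P"
      then have xP: "x \<in> P" using frontier_subset_closed[OF polytope_imp_closed[OF pP]] by blast
      obtain \<sigma> where \<sigma>: "\<sigma> \<in> Sig" "\<forall>w\<in>N. w \<bullet> x - t * (w \<bullet> r \<sigma> - 1/8) < h w" using tP xP by blast
      have "t *\<^sub>R r \<sigma> \<in> V" using V(3) \<sigma>(1) unfolding V0_def by blast
      then show "\<exists>v\<in>V. x - v \<in> interior P" using good[OF \<sigma>(2)] by blast
    qed
    then show ?thesis using V by blast
  qed
  have part2: "(\<Prod>i<k. card (X i)) \<le> 2 ^ DIM('a)"
  proof -
    have "X i \<noteq> {}" if "i < k" for i using lsum that by fastforce
    then have "Sig \<noteq> {}" unfolding Sig_def by (auto simp: PiE_eq_empty_iff)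
    then obtain \<sigma>0 where \<sigma>0: "\<sigma>0 \<in> Sig" by blast
    note BI = B_indep[OF \<sigma>0[unfolded Sig_def]]
    have "card (\<Union>i<k. X i - {\<sigma>0 i}) \<le> dim (\<Union>i<k. X i - {\<sigma>0 i})"
      using independent_bound_general[OF BI(1)] by blast
    also have "\<dots> \<le> DIM('a)" by (rule dim_subset_UNIV)
    finally have sumle: "(\<Sum>i<k. card (X i) - 1) \<le> DIM('a)" using BI(2) by simp
    have "(\<Prod>i<k. card (X i)) \<le> (\<Prod>i<k. (2::nat) ^ (card (X i) - 1))"
      by (intro prod_mono) (use le_pow2_pred in auto)
    also have "\<dots> = 2 ^ (\<Sum>i<k. card (X i) - 1)" by (simp add: power_sum)
    also have "\<dots> \<le> 2 ^ DIM('a)" using sumle by (intro power_increasing) auto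
    finally show ?thesis .
  qed
  have part3: "\<exists>\<epsilon>>0. \<exists>T. finite T \<and> card T \<le> 2 ^ DIM('a) \<and>
            P \<subseteq> (\<Union>t\<in>T. (\<lambda>x. t + (1 - \<epsilon>) *\<^sub>R x) ` P)"
  proof -
    define M where "M = (\<Sum>w\<in>N. \<bar>h w\<bar>) + 1 + t"
    have "0 \<le> (\<Sum>w\<in>N. \<bar>h w\<bar>)" by (simp add: sum_nonneg)
    then have M0: "t < M" unfolding M_def by linarith
    then have Mpos: "0 < M" using t0 by simp
    define \<epsilon> where "\<epsilon> = t / (8 * M)"
    have eps0: "0 < \<epsilon>" unfolding \<epsilon>_def using t0 Mpos by simp
    have eps1: "\<epsilon> < 1" unfolding \<epsilon>_def using t0 Mpos M0 by (simp add: divide_less_eq)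
    have epsM: "\<epsilon> * M = t / 8" unfolding \<epsilon>_def using Mpos by simp
    have "P \<subseteq> (\<Union>v\<in>V0. (\<lambda>x. v + (1 - \<epsilon>) *\<^sub>R x) ` P)"
    proof
      fix x assume xP: "x \<in> P"
      obtain \<sigma> where \<sigma>: "\<sigma> \<in> Sig" "\<forall>w\<in>N. w \<bullet> x - t * (w \<bullet> r \<sigma> - 1/8) < h w" using tP xP by blast
      define p where "p = (1 / (1 - \<epsilon>)) *\<^sub>R (x - t *\<^sub>R r \<sigma>)"
      have "\<forall>w\<in>N. w \<bullet> p \<le> h w"
      proof
        fix w assume w: "w \<in> N"
        have a: "w \<bullet> (x - t *\<^sub>R r \<sigma>) < h w - t / 8"
          using \<sigma>(2) w by (simp add: inner_diff_right algebra_simps)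
        have "\<bar>h w\<bar> \<le> M"
        proof -
          have "\<bar>h w\<bar> \<le> (\<Sum>w\<in>N. \<bar>h w\<bar>)" by (rule member_le_sum) (use w finN in auto)
          then show ?thesis unfolding M_def using t0 by simp
        qed
        then have "\<epsilon> * \<bar>h w\<bar> \<le> \<epsilon> * M" using eps0 by (intro mult_left_mono) auto
        moreover have "\<epsilon> * h w \<le> \<epsilon> * \<bar>h w\<bar>" using eps0 by (intro mult_left_mono) auto
        ultimately have "\<epsilon> * h w \<le> t / 8" using epsM by linarith
        then have "w \<bullet> (x - t *\<^sub>R r \<sigma>) \<le> (1 - \<epsilon>) * h w" using a by (simp add: algebra_simps)
        then have "w \<bullet> (x - t *\<^sub>R r \<sigma>) / (1 - \<epsilon>) \<le> h w" using eps1 by (simp add: pos_divide_le_eq mult.commute)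
        then show "w \<bullet> p \<le> h w" unfolding p_def by simp
      qed
      then have pP': "p \<in> P" using Prep by blast
      have "x = t *\<^sub>R r \<sigma> + (1 - \<epsilon>) *\<^sub>R p" unfolding p_def using eps1 by simp
      moreover have "t *\<^sub>R r \<sigma> \<in> V0" unfolding V0_def using \<sigma>(1) by blast
      ultimately show "x \<in> (\<Union>v\<in>V0. (\<lambda>x. v + (1 - \<epsilon>) *\<^sub>R x) ` P)" using pP' by blast
    qed
    moreover have "card V0 \<le> 2 ^ DIM('a)" using cV0 part2 by linarith
    ultimately have "finite V0 \<and> card V0 \<le> 2 ^ DIM('a) \<and> P \<subseteq> (\<Union>v\<in>V0. (\<lambda>x. v + (1 - \<epsilon>) *\<^sub>R x) ` P)"
      using finV0 by simp
    then show ?thesis apply - apply (rule exI[of _ \<epsilon>]) apply (rule conjI[OF eps0]) by (rule exI[of _ V0])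
  qed
  show ?thesis using part1 part2 part3 by blast
qed

end

theorem theorem4:
  fixes P :: "'a::euclidean_space set"
    and X :: "nat \<Rightarrow> 'a set"
    and k :: nat
  assumes "polytope P"
    and "aff_dim P = int DIM('a)"
    and "strongly_monotypic P"
    and "\<forall>i<k. X i \<subseteq> facet_normals P"
    and "\<forall>i<k. \<forall>j<k. i \<noteq> j \<longrightarrow> X i \<inter> X j = {}"
    and "\<forall>i<k. finite (X i) \<and> \<not> affine_dependent (X i) \<and> 0 \<in> rel_interior (convex hull (X i))"
    and "\<forall>v. (\<forall>i<k. v i \<in> span (X i)) \<and> (\<Sum>i<k. v i) = 0 \<longrightarrow> (\<forall>i<k. v i = 0)"
    and "\<forall>y. \<exists>v. (\<forall>i<k. v i \<in> span (X i)) \<and> y = (\<Sum>i<k. v i)"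
  shows "(\<exists>V. finite V \<and> card V = (\<Prod>i<k. card (X i)) \<and>
            (\<forall>x\<in>frontier P. \<exists>v\<in>V. x - v \<in> interior P))
       \<and> (\<Prod>i<k. card (X i)) \<le> 2 ^ DIM('a)
       \<and> (\<exists>\<epsilon>>0. \<exists>T. finite T \<and> card T \<le> 2 ^ DIM('a) \<and>
            P \<subseteq> (\<Union>t\<in>T. (\<lambda>x. t + (1 - \<epsilon>) *\<^sub>R x) ` P))"
proof -
  have finX: "\<forall>i<k. finite (X i)" and adX: "\<forall>i<k. \<not> affine_dependent (X i)"
    using assms(6) by auto
  have "\<forall>i\<in>{..<k}. \<exists>li. (\<forall>u\<in>X i. 0 < li u) \<and> sum li (X i) = 1 \<and> (\<Sum>u\<in>X i. li u *\<^sub>R u) = 0"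
    using assms(6) simplex_weights by blast
  from bchoice[OF this] obtain l where
    l: "\<forall>i\<in>{..<k}. (\<forall>u\<in>X i. 0 < l i u) \<and> sum (l i) (X i) = 1 \<and> (\<Sum>u\<in>X i. l i u *\<^sub>R u) = 0"
    by blast
  have lpos: "\<forall>i<k. \<forall>u\<in>X i. 0 < l i u" and lsum: "\<forall>i<k. sum (l i) (X i) = 1"
    and lz: "\<forall>i<k. (\<Sum>u\<in>X i. l i u *\<^sub>R u) = 0" using l by auto
  show ?thesis
    by (rule main_result[OF assms(1-5) finX adX lpos lsum lz assms(7,8)])
qed

end
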